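(* Let $(p_D)_{D\in\mathcal{I}}$ be a probability distribution on $\mathcal{I}$ and for $\mathbf{Q}\in B(\mathcal{L})$ define $$p^M(\mathbf{Q})=-\log\left(\max_{D\in\mathcal{I}}p_D\right)+\log\left(\sum_{E}\max_{D:\mathbf{Q}(D)=E}p_D\right),$$ where $E$ ranges over $\{\mathbf{Q}(D):D\in\mathcal{I}\}$. Then $p^M$ has no information arbitrage: whenever $\mathbf{Q}_2\twoheadrightarrow\mathbf{Q}_1$, we have $p^M(\mathbf{Q}_2)\ge p^M(\mathbf{Q}_1)$.
   Context: $\mathcal{I}$ is a countable nonempty set of database instances; queries are deterministic functions on $\mathcal{I}$; a query bundle is a finite tuple of queries from a language $\mathcal{L}$, evaluated componentwise; $B(\mathcal{L})$ is the set of bundles. $\mathbf{Q}_2\twoheadrightarrow\mathbf{Q}_1$ means: for all $D',D''\in\mathcal{I}$, $\mathbf{Q}_2(D')=\mathbf{Q}_2(D'')$ implies $\mathbf{Q}_1(D')=\mathbf{Q}_1(D'')$. ($p^M$ equals $H_\infty(X)-H_\infty(X\mid\mathbf{Q}(X))$ for min-entropy $H_\infty$ and $X$ distributed according to $p_D$.) *)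

theory Defs
  imports "HOL-Analysis.Analysis"
begin

type_synonym ('db, 'v) query = "'db \<Rightarrow> 'v"

definition bundles :: "('db, 'v) query set \<Rightarrow> ('db, 'v) query list set" where
  "bundles L = lists L"

definition bundle_eval :: "('db, 'v) query list \<Rightarrow> 'db \<Rightarrow> 'v list" where
  "bundle_eval Qs D = map (\<lambda>q. q D) Qs"

definition determines :: "'db set \<Rightarrow> ('db, 'v) query list \<Rightarrow> ('db, 'v) query list \<Rightarrow> bool" where
  "determines I Q2 Q1 \<longleftrightarrow>
     (\<forall>D'\<in>I. \<forall>D''\<in>I. bundle_eval Q2 D' = bundle_eval Q2 D'' \<longrightarrow> bundle_eval Q1 D' = bundle_eval Q1 D'')"

text \<open>The maxima are written as suprema (they are attained for a probability distribution
on a countable set); the sum over the countable set of outputs is an infinite sum.\<close>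
definition pM :: "'db set \<Rightarrow> ('db \<Rightarrow> real) \<Rightarrow> ('db, 'v) query list \<Rightarrow> real" where
  "pM I p Qs =
     - log 2 (SUP D\<in>I. p D)
     + log 2 (\<Sum>\<^sub>\<infinity>E \<in> bundle_eval Qs ` I. (SUP D\<in>{D\<in>I. bundle_eval Qs D = E}. p D))"

end

theory Submission
  imports Defs
begin

locale pdist =
  fixes I :: "'db set" and p :: "'db \<Rightarrow> real"
  assumes nn: "\<forall>D\<in>I. p D \<ge> 0" and hs: "(p has_sum 1) I"
begin

lemma summ: "p summable_on I" using hs by (auto simp: summable_on_def)

lemma inf1: "infsum p I = 1" using hs by (simp add: infsumI)

lemma subsum: "B \<subseteq> I \<Longrightarrow> p summable_on B"
  using summ summable_on_subset_banach by blast

lemma sub_le: "B \<subseteq> I \<Longrightarrow> infsum p B \<le> 1"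
  using infsum_mono2[OF subsum summ, of B] nn inf1 by auto

lemma fin_le: "finite B \<Longrightarrow> B \<subseteq> I \<Longrightarrow> sum p B \<le> 1"
  using sub_le[of B] by simp

lemma thresh_fin:
  assumes "c > 0" shows "finite {x\<in>I. p x \<ge> c}"
proof (rule ccontr)
  assume inf: "\<not> ?thesis"
  obtain n :: nat where n: "real n > 1 / c" using reals_Archimedean2 by blast
  obtain B where B: "finite B" "card B = n" "B \<subseteq> {x\<in>I. p x \<ge> c}"
    using infinite_arbitrarily_large[OF inf] by blast
  have "sum (\<lambda>_. c) B \<le> sum p B" using B by (intro sum_mono) auto
  moreover have "sum p B \<le> 1" using fin_le[of B] B by auto
  ultimately have "real n * c \<le> 1" using fin_le[of B] B by (auto simp: mult.commute)
  note this
  moreover have "real n * c > 1" using n assms by (simp add: field_simps)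
  ultimately show False by simp
qed

lemma attain:
  assumes "F \<subseteq> I" "F \<noteq> {}" shows "\<exists>d\<in>F. \<forall>x\<in>F. p x \<le> p d"
proof (cases "\<exists>x\<in>F. p x > 0")
  case False
  then obtain d where "d \<in> F" using assms by blast
  thus ?thesis using False nn assms by (metis in_mono not_less order_trans)
next
  case True
  then obtain x0 where x0: "x0 \<in> F" "p x0 > 0" by blast
  let ?S = "{x\<in>F. p x \<ge> p x0}"
  have fS: "finite ?S" using assms(1)
    by (intro rev_finite_subset[OF thresh_fin[OF x0(2)]]) auto
  have neS: "?S \<noteq> {}" using x0 by auto
  obtain d where d: "d \<in> ?S" "\<forall>y\<in>?S. p y \<le> p d"
  proof -
    have "Max (p ` ?S) \<in> p ` ?S" using fS neS by (intro Max_in) auto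
    then obtain d where "d \<in> ?S" "p d = Max (p ` ?S)" by auto
    moreover have "\<forall>y\<in>?S. p y \<le> Max (p ` ?S)" using fS by auto
    ultimately show ?thesis using that by (metis (no_types, lifting))
  qed
  show ?thesis
  proof (intro bexI[of _ d] ballI)
    fix x assume "x \<in> F"
    thus "p x \<le> p d" using d by (cases "p x \<ge> p x0") auto
  qed (use d in auto)
qed

definition mx :: "'db set \<Rightarrow> 'db" where
  "mx F = (SOME d. d \<in> F \<and> (\<forall>x\<in>F. p x \<le> p d))"

lemma mx: "F \<subseteq> I \<Longrightarrow> F \<noteq> {} \<Longrightarrow> mx F \<in> F \<and> (\<forall>x\<in>F. p x \<le> p (mx F))"
  unfolding mx_def by (rule someI_ex) (metis attain)

lemma sup_mx: "F \<subseteq> I \<Longrightarrow> F \<noteq> {} \<Longrightarrow> (SUP x\<in>F. p x) = p (mx F)"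
  using mx by (intro cSup_eq_maximum) auto

end

theorem lemma20:
  fixes I :: "'db set" and p :: "'db \<Rightarrow> real"
    and L :: "('db, 'v) query set" and Q1 Q2 :: "('db, 'v) query list"
  assumes "countable I" and "I \<noteq> {}"
    and "\<forall>D\<in>I. p D \<ge> 0" and "(p has_sum 1) I"
    and "Q1 \<in> bundles L" and "Q2 \<in> bundles L"
    and "determines I Q2 Q1"
  shows "pM I p Q2 \<ge> pM I p Q1"
proof -
  interpret pdist I p using assms by unfold_locales auto
  define fib where "fib Q E = {D\<in>I. bundle_eval Q D = E}" for Q :: "('db, 'v) query list" and E
  define dd where "dd Q E = mx (fib Q E)" for Q E
  have fibI: "fib Q E \<subseteq> I" for Q E by (auto simp: fib_def)
  have fibne: "E \<in> bundle_eval Q ` I \<Longrightarrow> fib Q E \<noteq> {}" for Q E by (auto simp: fib_def)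
  have ddp: "E \<in> bundle_eval Q ` I \<Longrightarrow> dd Q E \<in> I \<and> bundle_eval Q (dd Q E) = E
     \<and> (\<forall>x\<in>fib Q E. p x \<le> p (dd Q E))" for Q E
    using mx[OF fibI fibne] unfolding dd_def fib_def by auto
  have sumeq: "(\<Sum>\<^sub>\<infinity>E \<in> bundle_eval Q ` I. (SUP D\<in>{D\<in>I. bundle_eval Q D = E}. p D))
      = infsum p (dd Q ` bundle_eval Q ` I)" for Q
  proof -
    have inj: "inj_on (dd Q) (bundle_eval Q ` I)"
      by (rule inj_onI) (metis ddp)
    have "(\<Sum>\<^sub>\<infinity>E \<in> bundle_eval Q ` I. (SUP D\<in>{D\<in>I. bundle_eval Q D = E}. p D))
       = (\<Sum>\<^sub>\<infinity>E \<in> bundle_eval Q ` I. p (dd Q E))"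
      apply (rule infsum_cong)
      using sup_mx[OF fibI fibne] unfolding dd_def fib_def by auto
    also have "\<dots> = infsum p (dd Q ` bundle_eval Q ` I)"
      using infsum_reindex[OF inj, of p] by (simp add: o_def)
    finally show ?thesis .
  qed
  define A1 where "A1 = dd Q1 ` bundle_eval Q1 ` I"
  define A2 where "A2 = dd Q2 ` bundle_eval Q2 ` I"
  have A1I: "A1 \<subseteq> I" and A2I: "A2 \<subseteq> I" using ddp unfolding A1_def A2_def by auto
  define h where "h x = dd Q2 (bundle_eval Q2 x)" for x
  have hA: "h ` A1 \<subseteq> A2" unfolding h_def A1_def A2_def using ddp by blast
  have hge: "x \<in> I \<Longrightarrow> p x \<le> p (h x)" for x
    unfolding h_def using ddp[of "bundle_eval Q2 x" Q2] by (auto simp: fib_def)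
  have injh: "inj_on h A1"
  proof (rule inj_onI)
    fix x y assume xy: "x \<in> A1" "y \<in> A1" "h x = h y"
    have "x \<in> I" "y \<in> I" using xy A1I by auto
    have "bundle_eval Q2 x = bundle_eval Q2 y"
      using xy(3) ddp[of "bundle_eval Q2 x" Q2] ddp[of "bundle_eval Q2 y" Q2] \<open>x\<in>I\<close> \<open>y\<in>I\<close>
      unfolding h_def by (metis imageI)
    hence e: "bundle_eval Q1 x = bundle_eval Q1 y"
      using assms(7) \<open>x\<in>I\<close> \<open>y\<in>I\<close> unfolding determines_def by blast
    obtain E where "E \<in> bundle_eval Q1 ` I" "x = dd Q1 E" using xy(1) A1_def by auto
    hence x: "x = dd Q1 (bundle_eval Q1 x)" using ddp by metis
    obtain E' where "E' \<in> bundle_eval Q1 ` I" "y = dd Q1 E'" using xy(2) A1_def by auto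
    hence "y = dd Q1 (bundle_eval Q1 y)" using ddp by metis
    thus "x = y" using x e by simp
  qed
  have le12: "infsum p A1 \<le> infsum p A2"
  proof -
    have "infsum p A1 \<le> infsum (p \<circ> h) A1"
      apply (rule infsum_mono)
      using subsum[OF A1I] apply simp
      using summable_on_reindex[OF injh, of p] subsum hA A2I apply blast
      using hge A1I by auto
    also have "\<dots> = infsum p (h ` A1)" using infsum_reindex[OF injh, of p] by simp
    also have "\<dots> \<le> infsum p A2"
      apply (rule infsum_mono2)
      using subsum hA A2I nn by blast+
    finally show ?thesis .
  qed
  have pos: "infsum p A1 > 0"
  proof -
    obtain D where D: "D \<in> I" "p D > 0"
    proof (rule ccontr)
      assume "\<not> thesis"
      hence "\<forall>D\<in>I. p D = 0" using that nn by force
      hence "infsum p I = 0" by (simp add: infsum_0)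
      thus False using inf1 by simp
    qed
    define x where "x = dd Q1 (bundle_eval Q1 D)"
    have "x \<in> A1" unfolding x_def A1_def using D by auto
    have "p D \<le> p x" unfolding x_def using ddp[of "bundle_eval Q1 D" Q1] D by (auto simp: fib_def)
    have "infsum p {x} \<le> infsum p A1"
      apply (rule infsum_mono2) using subsum A1I \<open>x\<in>A1\<close> nn by auto
    thus ?thesis using \<open>p D \<le> p x\<close> D by simp
  qed
  show ?thesis
    unfolding pM_def sumeq A1_def[symmetric] A2_def[symmetric]
    using le12 pos by simp
qed

end
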